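(* For each $w\in\{1,2,3,4,5\}$, the function $z\mapsto g_w(e^z)$ is concave on the interval $\big[\ln(1-(1/2)^w),0\big]$.
   Context: $h(t)=(1-t)\left[\psi-\left(\frac{t}{1-t}\right)^{\chi}\right]$ with $\psi=13/10$, $\chi=1/2$, and for a positive integer $w$, $g_w(y)=\frac{1-y}{y}\,h\big((1-y)^{1/w}\big)$. *)

theory Defs
  imports "HOL-Analysis.Analysis"
begin

definition psi :: real where "psi = 13/10"
definition chi :: real where "chi = 1/2"

definition h :: "real \<Rightarrow> real" where
  "h t = (1 - t) * (psi - (t / (1 - t)) powr chi)"

definition g :: "nat \<Rightarrow> real \<Rightarrow> real" where
  "g w y = (1 - y) / y * h ((1 - y) powr (1 / real w))"

end

theory Submission
  imports Defs
begin

definition S :: "nat \<Rightarrow> real \<Rightarrow> real" where "S w z = (1 - exp z) powr (1 / real w)"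
definition Hs :: "real \<Rightarrow> real" where "Hs s = psi*(1-s) - sqrt(s*(1-s))"
definition Hd :: "real \<Rightarrow> real" where "Hd s = -psi - (1-2* s)/(2* sqrt(s*(1-s)))"
definition A :: "nat \<Rightarrow> real \<Rightarrow> real" where "A w s = s^w/(1-s^w) * Hs s"
definition G :: "nat \<Rightarrow> real \<Rightarrow> real" where "G w s = Hs s/(1-s^w) + s*Hd s/real w"

lemma S_props:
  assumes "w \<ge> 1" "z < 0"
  shows "0 < S w z" "S w z < 1" "S w z ^ w = 1 - exp z"
proof -
  have x: "0 < 1 - exp z" "1 - exp z < 1" using assms by auto
  show pos: "0 < S w z" unfolding S_def using x by simp
  show pw: "S w z ^ w = 1 - exp z" unfolding S_def using x assms
    by (simp add: powr_power)
  show "S w z < 1"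
  proof (rule ccontr)
    assume "\<not> S w z < 1"
    hence "1 \<le> S w z ^ w" by simp
    thus False using pw x by simp
  qed
qed

lemma spow_lt1: "0 < (s::real) \<Longrightarrow> s < 1 \<Longrightarrow> w \<ge> 1 \<Longrightarrow> s^w < 1"
  by (simp add: power_less_one_iff)

lemma f_eq:
  assumes "w \<ge> 1" "z < 0"
  shows "g w (exp z) = A w (S w z)"
proof -
  define s where "s = S w z"
  have s: "0 < s" "s < 1" "s^w = 1 - exp z" using S_props[OF assms] s_def by auto
  have "(s/(1-s)) powr chi = sqrt (s/(1-s))" unfolding chi_def using s
    by (simp add: powr_half_sqrt)
  moreover have "(1-s) * sqrt (s/(1-s)) = sqrt (s*(1-s))"
  proof -
    have "(1-s) = sqrt ((1-s)^2)" using s by simp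
    hence "(1-s) * sqrt (s/(1-s)) = sqrt ((1-s)^2 * (s/(1-s)))"
      by (metis real_sqrt_mult)
    also have "(1-s)^2 * (s/(1-s)) = s*(1-s)" using s by (simp add: power2_eq_square)
    finally show ?thesis .
  qed
  ultimately have "h s = Hs s" unfolding h_def Hs_def by (simp add: algebra_simps)
  moreover have "g w (exp z) = (1 - exp z)/exp z * h s" by (simp add: g_def S_def s_def)
  ultimately show ?thesis unfolding A_def s_def[symmetric] using s
    by simp
qed

lemma A_deriv:
  assumes "w \<ge> 1" "0 < s" "s < 1"
  shows "(A w has_real_derivative (real w* s^(w-1)/(1-s^w)^2 * Hs s + s^w/(1-s^w) * Hd s)) (at s)"
proof -
  have q: "1 - s^w \<noteq> 0" using spow_lt1[OF assms(2,3,1)] by simp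
  have r: "0 < s*(1-s)" using assms by simp
  have di: "((\<lambda>x. x*(1-x)) has_real_derivative 1 - 2 * s) (at s)"
    by (rule derivative_eq_intros refl)+ simp
  have ds: "((\<lambda>x. sqrt(x*(1-x))) has_real_derivative (1-2 * s)/(2* sqrt(s*(1-s)))) (at s)"
    using DERIV_chain2[OF DERIV_real_sqrt[OF r] di] by (simp add: divide_simps mult.commute)
  have sq1: "sqrt (s - s * s) * sqrt (s - s * s) = s - s * s" using r by (simp add: algebra_simps)
  have sq2: "\<And>x. sqrt (s - s * s) * (sqrt (s - s * s) * x) = (s - s * s) * x"
    using sq1 by (metis mult.assoc)
  have Aeq: "A w = (\<lambda>s. s^w/(1-s^w) * (psi*(1-s) - sqrt(s*(1-s))))"
    by (simp add: fun_eq_iff A_def Hs_def)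
  show ?thesis unfolding Aeq Hs_def Hd_def
    apply (rule ds derivative_eq_intros refl q)+
    using q r assms(2,3) apply (simp add: divide_simps)
    apply (simp add: algebra_simps power2_eq_square sq1 sq2)
    done
qed

lemma S_deriv:
  assumes "w \<ge> 1" "z < 0"
  shows "(S w has_real_derivative (-(1/real w) * S w z / (S w z ^ w) * exp z)) (at z)"
proof -
  define x where "x = 1 - exp z"
  have x: "0 < x" using assms x_def by auto
  have d1: "((\<lambda>z. 1 - exp z) has_real_derivative (- exp z)) (at z)"
    by (rule derivative_eq_intros refl)+ simp
  have d2: "((\<lambda>x. x powr (1/real w)) has_real_derivative (1/real w) * x powr (1/real w - 1)) (at x)"
    by (rule has_real_derivative_powr[OF x])
  have "((\<lambda>z. (1 - exp z) powr (1/real w)) has_real_derivative (1/real w) * x powr (1/real w - 1) * (- exp z)) (at z)"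
    using DERIV_chain2[OF d2[unfolded x_def] d1] x_def by simp
  moreover have "x powr (1/real w - 1) = S w z / (S w z ^ w)"
    using x S_props[OF assms] unfolding x_def S_def
    by (simp add: powr_diff)
  ultimately show ?thesis unfolding S_def[abs_def] x_def by simp
qed

lemma f_deriv:
  assumes "w \<ge> 1" "z < 0"
  shows "((\<lambda>z. g w (exp z)) has_real_derivative (- G w (S w z))) (at z)"
proof -
  define s where "s = S w z"
  have s: "0 < s" "s < 1" "s^w = 1 - exp z" using S_props[OF assms] s_def by auto
  have q: "1 - s^w \<noteq> 0" using spow_lt1[OF s(1,2) assms(1)] by simp
  have e: "exp z = 1 - s^w" using s by simp
  have pm: "s^(w-1) * s = s^w" using power_minus_mult[of w s] assms by simp
  have "((\<lambda>z. A w (S w z)) has_real_derivative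
     (real w* s^(w-1)/(1-s^w)^2 * Hs s + s^w/(1-s^w) * Hd s) * (-(1/real w) * s / (s ^ w) * exp z)) (at z)"
    using DERIV_chain2[OF A_deriv[OF assms(1) S_props(1,2)[OF assms]] S_deriv[OF assms]]
    unfolding s_def[symmetric] using assms by simp
  moreover have "(real w* s^(w-1)/(1-s^w)^2 * Hs s + s^w/(1-s^w) * Hd s) * (-(1/real w) * s / (s ^ w) * exp z)
     = - G w s"
  proof -
    have sw: "s^w \<noteq> 0" using s(1) by simp
    have "(real w* s^(w-1)/(1-s^w)^2 * Hs s + s^w/(1-s^w) * Hd s) * (-(1/real w) * s / (s ^ w) * exp z)
      = - ((s^(w-1) * s) / s^w * Hs s / (1-s^w) + s * Hd s / real w)"
      unfolding e using q sw assms apply (simp add: field_simps)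
      apply (simp add: algebra_simps power2_eq_square)
      done
    also have "\<dots> = - G w s" unfolding pm G_def using sw by simp
    finally show ?thesis .
  qed
  ultimately have d: "((\<lambda>z. A w (S w z)) has_real_derivative - G w s) (at z)" by simp
  show ?thesis unfolding s_def
    apply (rule has_field_derivative_transform_within_open[OF d[unfolded s_def], of "{..<0}"])
    using assms f_eq by auto
qed

definition kk :: "real \<Rightarrow> real" where
  "kk t = (t^3 - 2*psi*t^2 - t) / (2*(1+t^2))"

definition T :: "real \<Rightarrow> real" where "T s = sqrt (s/(1-s))"

lemma G_eq:
  assumes "w \<ge> 1" "0 < s" "s < 1"
  shows "G w s = (1-s)/(1-s^w) * (psi - T s) + kk (T s) / real w"
proof -
  define t where "t = T s"
  have t0: "0 < t" unfolding t_def T_def using assms by simp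
  have t2: "t^2 = s/(1-s)" unfolding t_def T_def using assms by simp
  have st: "s = (1-s)*t^2" using t2 assms by (simp add: field_simps)
  have sq: "sqrt (s*(1-s)) = (1-s)*t"
  proof -
    have "(1-s) = sqrt ((1-s)^2)" using assms by simp
    hence "(1-s) * t = sqrt ((1-s)^2 * (s/(1-s)))" unfolding t_def T_def
      by (metis real_sqrt_mult)
    also have "(1-s)^2 * (s/(1-s)) = s*(1-s)" using assms by (simp add: power2_eq_square)
    finally show ?thesis by simp
  qed
  have hs: "Hs s = (1-s)*(psi - t)" unfolding Hs_def sq by (simp add: algebra_simps)
  have hd: "s * Hd s = - psi * s - (1 - 2* s) * t / 2"
  proof -
    have "s * Hd s = - psi * s - s * (1 - 2* s) / (2 * ((1-s)*t))"
      unfolding Hd_def sq by (simp add: algebra_simps)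
    also have "s / ((1-s)*t) = t" using st t0 assms by (simp add: field_simps power2_eq_square)
    hence "s * (1 - 2* s) / (2 * ((1-s)*t)) = (1 - 2* s) * t / 2"
      by (metis (no_types, lifting) divide_divide_eq_left times_divide_eq_left mult.commute)
    finally show ?thesis .
  qed
  have kt: "kk t = - psi * s - (1 - 2* s) * t / 2"
  proof -
    have e1: "1 + t^2 = 1/(1-s)" using t2 assms by (simp add: field_simps)
    have e3: "t^3 = t * (s/(1-s))" using t2 by (simp add: power3_eq_cube power2_eq_square)
    have ns: "1 - s \<noteq> 0" using assms by simp
    have "kk t = (t * (s/(1-s)) - 2*psi*(s/(1-s)) - t) / (2*(1/(1-s)))"
      using e1 unfolding kk_def e3 t2 by simp
    also have "\<dots> = (1-s)/2 * (t * (s/(1-s)) - 2*psi*(s/(1-s)) - t)" by simp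
    also have "\<dots> = (t*((1-s)*(s/(1-s))) - 2*psi*((1-s)*(s/(1-s))) - t*(1-s))/2"
    proof -
      have "\<And>u. (1-s)/2 * (t * u - 2*psi*u - t) = (t*((1-s)*u) - 2*psi*((1-s)*u) - t*(1-s))/2"
        by (simp add: field_simps)
      thus ?thesis by blast
    qed
    also have "\<dots> = (t* s - 2*psi* s - t*(1-s))/2" using ns by simp
    also have "\<dots> = - psi * s - (1 - 2 * s) * t / 2" by (simp add: field_simps)
    finally show ?thesis .
  qed
  have ks: "kk t = s * Hd s" using hd kt by simp
  show ?thesis unfolding G_def t_def[symmetric] hs ks by simp
qed

lemma kk_deriv: "(kk has_real_derivative (t^4 + 4*t^2 - 4*psi*t - 1)/(2*(1+t^2)^2)) (at t)"
proof -
  have a: "0 < 1 + t^2" by (smt (verit) zero_le_power2)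
  show ?thesis unfolding kk_def
    apply (rule derivative_eq_intros refl)+
    using a apply simp
    using a apply (simp add: divide_simps)
    apply (simp add: algebra_simps power2_eq_square power4_eq_xxxx power3_eq_cube)
    done
qed

lemma kk_antimono:
  assumes "0 \<le> t1" "t1 \<le> t2" "t2 \<le> 1"
  shows "kk t2 \<le> kk t1"
proof (rule deriv_nonpos_imp_antimono[OF kk_deriv _ assms(2)])
  fix x assume x: "x \<in> {t1..t2}"
  hence "0 \<le> x" "x \<le> 1" using assms by auto
  have "x^4 \<le> x^2" using \<open>0 \<le> x\<close> \<open>x \<le> 1\<close>
    by (simp add: power_decreasing)
  moreover have "x^2 \<le> x" using \<open>0 \<le> x\<close> \<open>x \<le> 1\<close>
    by (simp add: power2_eq_square mult_left_le)
  ultimately have "x^4 + 4*x^2 - 4*psi*x - 1 \<le> 0" using \<open>0 \<le> x\<close> unfolding psi_def by simp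
  moreover have d: "0 < 1 + x^2" by (smt (verit) zero_le_power2)
  ultimately show "(x^4 + 4*x^2 - 4*psi*x - 1)/(2*(1+x^2)^2) \<le> 0"
    by (intro divide_nonpos_pos) auto
qed

lemma G_mono:
  assumes "w \<ge> 1" "0 < s1" "s1 \<le> s2" "s2 \<le> 1/2"
  shows "G w s2 \<le> G w s1"
proof -
  have T12: "T s1 \<le> T s2" unfolding T_def using assms
    by (intro real_sqrt_le_mono frac_le) auto
  have T2: "T s2 \<le> 1" unfolding T_def using assms by simp
  have T1: "0 \<le> T s1" unfolding T_def using assms by simp
  have ps: "1 < psi" unfolding psi_def by simp
  have c: "(1-s)/(1-s^w) = 1 / (\<Sum>i<w. s^i)" if "0 < s" "s < 1" for s :: real
    using that by (simp add: one_diff_power_eq)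
  have sp: "0 < (\<Sum>i<w. s^i)" if "0 < s" for s :: real
    using that assms(1) by (intro sum_pos) (auto simp: lessThan_empty_iff)
  have sm: "(\<Sum>i<w. s1^i) \<le> (\<Sum>i<w. s2^i)"
    using assms by (intro sum_mono power_mono) auto
  have cc: "(1-s2)/(1-s2^w) \<le> (1-s1)/(1-s1^w)"
    unfolding c[of s1] c[of s2] using assms sm sp[of s1] sp[of s2]
    by (simp add: frac_le c)
  have c0: "0 \<le> (1-s1)/(1-s1^w)" using c[of s1] sp[of s1] assms by simp
  have m1: "(1-s2)/(1-s2^w) * (psi - T s2) \<le> (1-s1)/(1-s1^w) * (psi - T s1)"
    using cc c0 T12 T2 ps by (intro mult_mono) auto
  have m2: "kk (T s2) / real w \<le> kk (T s1) / real w"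
    using kk_antimono[OF T1 T12 T2] by (simp add: divide_right_mono)
  show ?thesis using G_eq[of w s1] G_eq[of w s2] assms m1 m2 by simp
qed

lemma S_le_half:
  assumes "w \<ge> 1" "ln (1 - (1/2)^w) \<le> z" "z < 0"
  shows "S w z \<le> 1/2"
proof -
  have p: "0 < 1 - (1/2::real)^w"
    using assms(1) by (simp add: power_less_one_iff)
  have "exp (ln (1 - (1/2)^w)) \<le> exp z" using assms(2) by simp
  hence "1 - (1/2)^w \<le> exp z" using p by simp
  hence "S w z ^ Suc (w-1) \<le> (1/2) ^ Suc (w-1)"
    using S_props(3)[OF assms(1,3)] assms(1) by simp
  thus ?thesis by (rule power_le_imp_le_base) simp
qed

lemma S_anti:
  assumes "w \<ge> 1" "x \<le> y" "y < 0"
  shows "S w y \<le> S w x"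
  unfolding S_def using assms by (intro powr_mono2) auto

lemma conc_part:
  assumes "w \<ge> 1" "b < 0"
  shows "concave_on {ln (1 - (1/2)^w)..b} (\<lambda>z. g w (exp z))"
  unfolding concave_on_def
proof (rule convex_on_realI[where f' = "\<lambda>x. G w (S w x)"])
  show "connected {ln (1 - (1/2)^w)..b}" by simp
  fix x assume x: "x \<in> {ln (1 - (1/2)^w)..b}"
  show "((\<lambda>z. - g w (exp z)) has_real_derivative G w (S w x)) (at x)"
    using DERIV_minus[OF f_deriv[OF assms(1), of x]] x assms by simp
  fix y assume y: "y \<in> {ln (1 - (1/2)^w)..b}" and xy: "x \<le> y"
  show "G w (S w x) \<le> G w (S w y)"
    using G_mono[OF assms(1) S_props(1)[OF assms(1), of y] S_anti[OF assms(1) xy] S_le_half[OF assms(1), of x]]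
      x y assms by auto
qed

lemma f_lim0:
  assumes "w \<ge> 1"
  shows "((\<lambda>z. g w (exp z)) \<longlongrightarrow> 0) (at_left 0)"
proof (rule Lim_null_comparison)
  show "\<forall>\<^sub>F z in at_left 0. norm (g w (exp z)) \<le> (psi+1) * ((1 - exp z)/exp z)"
  proof (rule eventually_mono[OF eventually_at_left_real[of "-1" 0]])
    fix z :: real assume "z \<in> {-1<..<0}"
    hence z: "z < 0" by simp
    define s where "s = S w z"
    have s: "0 < s" "s < 1" "s^w = 1 - exp z" using S_props[OF assms z] s_def by auto
    have f: "g w (exp z) = (1 - exp z)/exp z * Hs s"
      using f_eq[OF assms z] s unfolding A_def s_def[symmetric] by simp
    have nn: "0 \<le> (1 - exp z)/exp z" using z by simp
    have "s*(1-s) \<le> 1" using s by (simp add: mult_le_one)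
    hence sq: "sqrt (s*(1-s)) \<le> 1" by simp
    have sq0: "0 \<le> sqrt (s*(1-s))" using s by simp
    have p1: "0 \<le> psi*(1-s)" using s unfolding psi_def by simp
    have p2: "psi*(1-s) \<le> psi" using s unfolding psi_def by simp
    have "\<bar>Hs s\<bar> \<le> psi + 1" unfolding Hs_def abs_le_iff using p1 p2 sq sq0 by linarith
    thus "norm (g w (exp z)) \<le> (psi+1) * ((1 - exp z)/exp z)"
    proof -
      have "norm (g w (exp z)) = (1 - exp z)/exp z * \<bar>Hs s\<bar>"
        unfolding f using nn z by (simp add: abs_mult)
      also have "\<dots> \<le> (1 - exp z)/exp z * (psi + 1)"
        using \<open>\<bar>Hs s\<bar> \<le> psi + 1\<close> nn by (rule mult_left_mono)
      finally show ?thesis by (simp add: mult.commute)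
    qed
  qed simp
  have "((\<lambda>z. (psi+1) * ((1 - exp z)/exp z)) \<longlongrightarrow> (psi+1) * ((1 - exp 0)/exp 0)) (at_left 0)"
    by (intro tendsto_intros) auto
  thus "((\<lambda>z. (psi+1) * ((1 - exp z)/exp z)) \<longlongrightarrow> 0) (at_left 0)" by simp
qed

theorem lemma39:
  fixes w :: nat
  assumes "w \<in> {1,2,3,4,5}"
  shows "concave_on {ln (1 - (1/2) ^ w) .. 0} (\<lambda>z. g w (exp z))"
proof -
  have w: "w \<ge> 1" using assms by auto
  define a where "a = ln (1 - (1/2::real) ^ w)"
  define f where "f = (\<lambda>z. g w (exp z))"
  have f0: "f 0 = 0" unfolding f_def g_def by simp
  show ?thesis unfolding a_def[symmetric] f_def[symmetric]
  proof (rule concave_on_linorderI)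
    show "convex {a..0}" by simp
    fix t x y :: real
    assume t: "0 < t" "t < 1" and x: "x \<in> {a..0}" and y: "y \<in> {a..0}" and xy: "x < y"
    show "(1 - t) * f x + t * f y \<le> f ((1 - t) *\<^sub>R x + t *\<^sub>R y)"
    proof (cases "y < 0")
      case True
      have "concave_on {a..y} f" using conc_part[OF w True] unfolding a_def f_def .
      from concave_onD[OF this, of t x y] t x y xy show ?thesis by auto
    next
      case False
      hence y0: "y = 0" using y by auto
      have x0: "x < 0" using xy y0 by simp
      have lim1: "((\<lambda>y'. f ((1 - t) * x + t * y')) \<longlongrightarrow> f ((1 - t) * x + t * 0)) (at_left 0)"
      proof -
        have "(1 - t) * x + t * 0 < 0" using x0 t by (simp add: mult_pos_neg)
        hence ic: "isCont f ((1 - t) * x + t * 0)"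
          using DERIV_isCont[OF f_deriv[OF w]] unfolding f_def by blast
        have lin: "((\<lambda>y'. (1 - t) * x + t * y') \<longlongrightarrow> (1 - t) * x + t * 0) (at_left 0)"
          by (intro tendsto_intros)
        show ?thesis using isCont_tendsto_compose[OF ic lin] .
      qed
      have lim2: "((\<lambda>y'. (1 - t) * f x + t * f y') \<longlongrightarrow> (1 - t) * f x + t * 0) (at_left 0)"
        using f_lim0[OF w] unfolding f_def[symmetric] by (intro tendsto_intros)
      have ev: "\<forall>\<^sub>F y' in at_left 0. (1 - t) * f x + t * f y' \<le> f ((1 - t) * x + t * y')"
      proof (rule eventually_mono[OF eventually_at_left_real[OF x0]])
        fix y' assume y': "y' \<in> {x<..<0}"
        hence "concave_on {a..y'} f" using conc_part[OF w, of y'] unfolding a_def f_def by simp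
        from concave_onD[OF this, of t x y'] t x y'
        show "(1 - t) * f x + t * f y' \<le> f ((1 - t) * x + t * y')" by auto
      qed
      have "(1 - t) * f x + t * 0 \<le> f ((1 - t) * x + t * 0)"
        using tendsto_le[OF trivial_limit_at_left_real lim1 lim2 ev] .
      thus ?thesis using y0 f0 by simp
    qed
  qed
qed

end
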